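(* Assume the setting of the context and fix $\Delta=(h,\Delta x)$. Let $(c^{(\iota)}_{i,j})$, $\iota\in\mathbb{N}$, and $\mathbf{V}^{(\iota)}=(\mathbf{V}^{(\iota)}_1,\mathbf{V}^{(\iota)}_2)\in B(\mathcal{A}^{\Delta x})^2$ be a sequence generated by the policy iteration: starting from an initial policy $c^{(0)}_{i,j}\in\mathcal{C}^\Delta_j(x_i)$, for each $\iota\ge0$, (i) (policy evaluation) $\mathbf{V}^{(\iota)}$ solves, for all $i\in\mathbb{N}$, $j=1,2$, $$V^{(\iota)}_{i,j}=hu(c^{(\iota)}_{i,j})+(1-\rho h)\Big[\lambda_jhV^{(\iota)}_{i,\bar\jmath}+(1-\lambda_jh)\sum_k\beta_k\big(x_i+hs_{i,j}(c^{(\iota)}_{i,j})\big)V^{(\iota)}_{k,j}\Big];$$ (ii) (policy update) $c^{(\iota+1)}_{i,j}\in\arg\max_{c\in\mathcal{C}^\Delta_j(x_i)}\Big\{hu(c)+(1-\rho h)(1-\lambda_jh)\sum_k\beta_k(x_i+hs_{i,j}(c))V^{(\iota)}_{k,j}\Big\}$. Then $\mathbf{V}^{(\iota)}\le\mathbf{V}^{(\iota+1)}$ componentwise for all $\iota\in\mathbb{N}$. Moreover $\lim_{\iota\to\infty}\mathbf{V}^{(\iota)}=\mathbf{V}$, where $\mathbf{V}\in B(\mathcal{A}^{\Delta x})^2$ is the unique solution of the scheme, i.e. $\mathcal{F}^\Delta_j(x_i,(V_{i,j},V_{i,\bar\jmath}),V_{\cdot,j})=0$ for all $i\in\mathbb{N}$,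 $j=1,2$.
   Context: Constants: $\rho>0$, $r<\rho$, $0<y_1<y_2$, $\gamma>1$, $\underline{x}\le0$ with $\rho\underline{x}+y_j>0$, $\lambda_1,\lambda_2\ge0$; $\bar\jmath=3-j$; $u(c)=\frac{c^{1-\gamma}}{1-\gamma}$ for $c>0$, $u(0)=-\infty$. Discretization $\Delta=(h,\Delta x)$, $h,\Delta x>0$, $\rho h<1$, $\lambda_jh<1$. Grid $x_i=\underline{x}+i\Delta x$, $i\in\mathbb{N}=\{0,1,\dots\}$, $\mathcal{A}^{\Delta x}=\{x_i\}$; $B(\mathcal{A}^{\Delta x})$ = bounded real sequences indexed by $\mathbb{N}$. $\beta_k(x)=\max\{0,1-|x-x_k|/\Delta x\}$ for $x\ge\underline{x}$. $\mathcal{C}^\Delta_j(x_i)=\{c\ge0:x_i+h(rx_i+y_j-c)\ge\underline{x}\}$, $s_{i,j}(c)=rx_i+y_j-c$. Scheme: $$\mathcal{F}^\Delta_j(x_i,(\mathsf{q}_j,\mathsf{q}_{\bar\jmath}),\mathsf{U})=\rho\mathsf{q}_j-(1-\rho h)\lambda_j(\mathsf{q}_{\bar\jmath}-\mathsf{q}_j)-\sup_{c\in\mathcal{C}^\Delta_j(x_i)}\Big\{u(c)+\frac{(1-\rho h)(1-\lambda_jh)}{h}\Big(\sum_k\beta_k(x_i+hs_{i,j}(c))\mathsf{U}_k-\mathsf{q}_j\Big)\Big\}.$$ *)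

theory Defs
  imports "HOL-Analysis.Analysis"
begin

definition util :: "real \<Rightarrow> real \<Rightarrow> ereal" where
  "util \<gamma> c = (if c > 0 then ereal (c powr (1 - \<gamma>) / (1 - \<gamma>)) else -\<infinity>)"

definition grid :: "real \<Rightarrow> real \<Rightarrow> nat \<Rightarrow> real" where
  "grid xl dx i = xl + real i * dx"

definition hatfn :: "real \<Rightarrow> real \<Rightarrow> nat \<Rightarrow> real \<Rightarrow> real" where
  "hatfn xl dx k x = max 0 (1 - \<bar>x - grid xl dx k\<bar> / dx)"

definition interp :: "real \<Rightarrow> real \<Rightarrow> (nat \<Rightarrow> real) \<Rightarrow> real \<Rightarrow> real" where
  "interp xl dx U x = (\<Sum>k. hatfn xl dx k x * U k)"

definition drift :: "real \<Rightarrow> real \<Rightarrow> real \<Rightarrow> real \<Rightarrow> nat \<Rightarrow> real \<Rightarrow> real" where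
  "drift r yj xl dx i c = r * grid xl dx i + yj - c"

definition adm :: "real \<Rightarrow> real \<Rightarrow> real \<Rightarrow> real \<Rightarrow> real \<Rightarrow> nat \<Rightarrow> real set" where
  "adm r yj h xl dx i = {c. c \<ge> 0 \<and> grid xl dx i + h * drift r yj xl dx i c \<ge> xl}"

definition schemeF ::
  "real \<Rightarrow> real \<Rightarrow> real \<Rightarrow> real \<Rightarrow> real \<Rightarrow> real \<Rightarrow> real \<Rightarrow> real \<Rightarrow>
   nat \<Rightarrow> real \<Rightarrow> real \<Rightarrow> (nat \<Rightarrow> real) \<Rightarrow> ereal" where
  "schemeF \<rho> r \<gamma> yj lj h xl dx i q qbar U =
     ereal (\<rho> * q - (1 - \<rho> * h) * lj * (qbar - q))
     - (SUP c \<in> adm r yj h xl dx i.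
          util \<gamma> c + ereal ((1 - \<rho> * h) * (1 - lj * h) / h
             * (interp xl dx U (grid xl dx i + h * drift r yj xl dx i c) - q)))"

end

theory Submission
  imports Defs
begin

definition ur :: "real \<Rightarrow> real \<Rightarrow> real" where
  "ur \<gamma> c = c powr (1 - \<gamma>) / (1 - \<gamma>)"

lemma util_pos: "c > 0 \<Longrightarrow> util \<gamma> c = ereal (ur \<gamma> c)"
  by (simp add: util_def ur_def)

lemma util_npos: "\<not> c > 0 \<Longrightarrow> util \<gamma> c = -\<infinity>"
  by (simp add: util_def)

lemma ur_nonpos: "\<gamma> > 1 \<Longrightarrow> c > 0 \<Longrightarrow> ur \<gamma> c \<le> 0"
  unfolding ur_def by (simp add: divide_nonneg_neg)

lemma interp_rep:
  assumes "dx > 0" "x \<ge> xl"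
  shows "\<exists>k t. 0 \<le> t \<and> t \<le> 1 \<and> (\<forall>U. interp xl dx U x = (1-t) * U k + t * U (Suc k))"
proof -
  define z where "z = (x - xl) / dx"
  have z0: "z \<ge> 0" using assms by (simp add: z_def)
  define k where "k = nat \<lfloor>z\<rfloor>"
  have kz: "real k = of_int \<lfloor>z\<rfloor>" using z0 by (simp add: k_def)
  have k1: "real k \<le> z" "z < real k + 1" using kz by linarith+
  define t where "t = z - real k"
  have hz: "hatfn xl dx m x = max 0 (1 - \<bar>z - real m\<bar>)" for m
  proof -
    have "(x - (xl + real m * dx)) / dx = z - real m" using assms by (simp add: z_def field_simps)
    hence "\<bar>x - (xl + real m * dx)\<bar> / dx = \<bar>z - real m\<bar>" using assms
      by (metis abs_divide abs_of_pos)
    thus ?thesis by (simp add: hatfn_def grid_def)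
  qed
  have h0: "hatfn xl dx m x = 0" if "m \<notin> {k, Suc k}" for m
  proof -
    from that have "m < k \<or> m \<ge> Suc (Suc k)" by auto
    hence "\<bar>z - real m\<bar> \<ge> 1"
    proof
      assume "m < k" hence "real m + 1 \<le> real k" by linarith
      thus ?thesis using k1 by linarith
    next
      assume "m \<ge> Suc (Suc k)" hence "real m \<ge> real k + 2" by linarith
      thus ?thesis using k1 by linarith
    qed
    thus ?thesis by (simp add: hz)
  qed
  have hk: "hatfn xl dx k x = 1 - t" using k1 by (simp add: hz t_def)
  have hk1: "hatfn xl dx (Suc k) x = t" using k1 by (simp add: hz t_def)
  have "interp xl dx U x = (1-t) * U k + t * U (Suc k)" for U
  proof -
    have "interp xl dx U x = (\<Sum>m\<in>{k, Suc k}. hatfn xl dx m x * U m)"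
      unfolding interp_def by (rule suminf_finite) (auto simp: h0)
    thus ?thesis by (simp add: hk hk1)
  qed
  moreover have "0 \<le> t" "t \<le> 1" using k1 by (auto simp: t_def)
  ultimately show ?thesis by blast
qed

lemma interp_mono:
  assumes "dx > 0" "x \<ge> xl" "\<And>k. U k \<le> U' k + d"
  shows "interp xl dx U x \<le> interp xl dx U' x + d"
proof -
  obtain k t where t: "0 \<le> t" "t \<le> 1" and r: "\<And>U. interp xl dx U x = (1-t) * U k + t * U (Suc k)"
    using interp_rep[OF assms(1,2)] by blast
  have "(1-t) * U k \<le> (1-t) * (U' k + d)" using t assms(3) by (intro mult_left_mono) auto
  moreover have "t * U (Suc k) \<le> t * (U' (Suc k) + d)" using t assms(3) by (intro mult_left_mono) auto
  ultimately show ?thesis unfolding r by (simp add: algebra_simps)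
qed

lemma interp_le:
  assumes "dx > 0" "x \<ge> xl" "\<And>k. U k \<le> M"
  shows "interp xl dx U x \<le> M"
  using interp_mono[OF assms(1,2), of U "\<lambda>_. 0" M] assms(3) by (simp add: interp_def)

lemma interp_tendsto:
  assumes "dx > 0" "x \<ge> xl" "\<And>k. (\<lambda>n. U n k) \<longlonglongrightarrow> L k"
  shows "(\<lambda>n. interp xl dx (U n) x) \<longlonglongrightarrow> interp xl dx L x"
proof -
  obtain k t where r: "\<And>U. interp xl dx U x = (1-t) * U k + t * U (Suc k)"
    using interp_rep[OF assms(1,2)] by blast
  show ?thesis unfolding r by (intro tendsto_intros assms(3))
qed

lemma geom:
  fixes \<theta> x d :: real
  assumes "0 \<le> \<theta>" "\<theta> < 1" "\<And>n. x \<le> \<theta>^n * d"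
  shows "x \<le> 0"
proof -
  have "(\<lambda>n. \<theta>^n * d) \<longlonglongrightarrow> 0"
    using assms by (intro tendsto_mult_left_zero LIMSEQ_power_zero) auto
  thus ?thesis by (rule LIMSEQ_le_const) (use assms(3) in auto)
qed

lemma real_key:
  fixes h \<rho> lj a I q qb :: real
  assumes "h > 0"
  shows "(a + (1 - \<rho>*h) * (1 - lj*h) / h * (I - q) \<le> \<rho>*q - (1-\<rho>*h)*lj*(qb - q) - e)
     \<longleftrightarrow> (h*a + (1-\<rho>*h)*(1-lj*h)*I + (1-\<rho>*h)*lj*h*qb \<le> q - h*e)"
proof -
  have "(a + (1 - \<rho>*h) * (1 - lj*h) / h * (I - q) \<le> \<rho>*q - (1-\<rho>*h)*lj*(qb - q) - e)
     \<longleftrightarrow> h*(a + (1 - \<rho>*h) * (1 - lj*h) / h * (I - q)) \<le> h*(\<rho>*q - (1-\<rho>*h)*lj*(qb - q) - e)"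
    using assms by simp
  also have "h*(a + (1 - \<rho>*h) * (1 - lj*h) / h * (I - q)) = h*a + (1-\<rho>*h)*(1-lj*h)*I - (1-\<rho>*h)*(1-lj*h)*q"
    using assms by (simp add: field_simps)
  also have "h*(\<rho>*q - (1-\<rho>*h)*lj*(qb - q) - e) = q - h*e - (1-\<rho>*h)*(1-lj*h)*q - (1-\<rho>*h)*lj*h*qb"
    by (simp add: algebra_simps)
  finally show ?thesis by linarith
qed

lemma fp_char:
  assumes hp: "h > 0"
  shows "schemeF \<rho> r \<gamma> yj lj h xl dx i q qb U = 0 \<longleftrightarrow>
   ((\<forall>c\<in>adm r yj h xl dx i. c > 0 \<longrightarrow> h*ur \<gamma> c + (1-\<rho>*h)*(1-lj*h)*interp xl dx U (grid xl dx i + h*drift r yj xl dx i c) + (1-\<rho>*h)*lj*h*qb \<le> q)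
   \<and> (\<forall>\<epsilon>>0. \<exists>c\<in>adm r yj h xl dx i. c > 0 \<and> q - \<epsilon> \<le> h*ur \<gamma> c + (1-\<rho>*h)*(1-lj*h)*interp xl dx U (grid xl dx i + h*drift r yj xl dx i c) + (1-\<rho>*h)*lj*h*qb))"
  (is "?F = 0 \<longleftrightarrow> ?UP \<and> ?LO")
proof -
  define \<Phi> where "\<Phi> c = util \<gamma> c + ereal ((1 - \<rho> * h) * (1 - lj * h) / h
             * (interp xl dx U (grid xl dx i + h * drift r yj xl dx i c) - q))" for c
  define L where "L = \<rho> * q - (1 - \<rho> * h) * lj * (qb - q)"
  define S where "S = (SUP c\<in>adm r yj h xl dx i. \<Phi> c)"
  define R where "R c = h*ur \<gamma> c + (1-\<rho>*h)*(1-lj*h)*interp xl dx U (grid xl dx i + h*drift r yj xl dx i c) + (1-\<rho>*h)*lj*h*qb" for c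
  have F: "?F = ereal L - S" by (simp add: schemeF_def \<Phi>_def L_def S_def)
  have phi_le: "\<Phi> c \<le> ereal (L - e) \<longleftrightarrow> (c > 0 \<longrightarrow> R c \<le> q - h*e)" for c e
  proof (cases "c > 0")
    case True
    thus ?thesis using real_key[OF hp, of "ur \<gamma> c" \<rho> lj "interp xl dx U (grid xl dx i + h*drift r yj xl dx i c)" q qb e]
      by (simp add: \<Phi>_def util_pos L_def R_def)
  qed (simp add: \<Phi>_def util_npos)
  have phi_gt: "ereal (L - e) < \<Phi> c \<longleftrightarrow> (c > 0 \<and> q - h*e < R c)" for c e
    using phi_le[of c e] by (cases "c > 0") (auto simp: \<Phi>_def util_npos not_le)
  have UPeq: "?UP \<longleftrightarrow> (\<forall>c\<in>adm r yj h xl dx i. \<Phi> c \<le> ereal L)"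
    using phi_le[of _ 0] by (simp add: R_def)
  show ?thesis
  proof
    assume "?F = 0"
    hence SL: "S = ereal L" unfolding F by (cases S) auto
    have "?UP" unfolding UPeq SL[symmetric] S_def by (auto intro: SUP_upper)
    moreover have "\<forall>\<epsilon>>0. \<exists>c\<in>adm r yj h xl dx i. c > 0 \<and> q - \<epsilon> \<le> R c"
    proof (intro allI impI)
      fix \<epsilon> :: real assume e: "\<epsilon> > 0"
      have "ereal (L - \<epsilon>/h) < S" using SL e hp by simp
      then obtain c where c: "c \<in> adm r yj h xl dx i" "ereal (L - \<epsilon>/h) < \<Phi> c"
        unfolding S_def by (auto simp: less_SUP_iff)
      hence "c > 0" "q - h*(\<epsilon>/h) < R c" using phi_gt by auto
      thus "\<exists>c\<in>adm r yj h xl dx i. c > 0 \<and> q - \<epsilon> \<le> R c" using c hp by (auto intro!: bexI[of _ c])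
    qed
    ultimately show "?UP \<and> ?LO" by (simp add: R_def)
  next
    assume A: "?UP \<and> ?LO"
    have "S \<le> ereal L" using A unfolding UPeq S_def by (auto intro: SUP_least)
    moreover have "ereal L \<le> S"
    proof (rule ereal_le_epsilon2)
      fix e :: real assume e: "e > 0"
      then obtain c where c: "c \<in> adm r yj h xl dx i" "c > 0" "q - h*(e/2) \<le> R c"
        using A hp unfolding R_def by (meson half_gt_zero mult_pos_pos)
      have "e*h > 0" using e hp by simp
      hence "\<not> \<Phi> c \<le> ereal (L - e)" using phi_le[of c "e"] c
        by (simp add: algebra_simps)
      hence "ereal (L - e) \<le> \<Phi> c" by simp
      also have "\<Phi> c \<le> S" unfolding S_def using c by (auto intro: SUP_upper)
      finally have "ereal (L - e) \<le> S" .
      thus "ereal L \<le> S + ereal e" using e by (cases S) auto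
    qed
    ultimately have "S = ereal L" by simp
    thus "?F = 0" unfolding F by simp
  qed
qed

theorem mainTheorem13:
  fixes \<rho> r \<gamma> xl h dx :: real
    and y lam :: "nat \<Rightarrow> real"
    and c V :: "nat \<Rightarrow> nat \<Rightarrow> nat \<Rightarrow> real"
  assumes "\<rho> > 0" and "r < \<rho>" and "0 < y 1" and "y 1 < y 2" and "\<gamma> > 1"
    and "xl \<le> 0" and "\<forall>j\<in>{1,2}. \<rho> * xl + y j > 0"
    and "\<forall>j\<in>{1,2}. lam j \<ge> 0"
    and "h > 0" and "dx > 0" and "\<rho> * h < 1" and "\<forall>j\<in>{1,2}. lam j * h < 1"
    \<comment> \<open>initial policy\<close>
    and init: "\<forall>i. \<forall>j\<in>{1,2}. c 0 i j \<in> adm r (y j) h xl dx i"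
    \<comment> \<open>iterates are bounded: V^(iota) in B(A)^2\<close>
    and bdd: "\<forall>\<iota>. \<forall>j\<in>{1,2}. bounded (range (\<lambda>i. V \<iota> i j))"
    \<comment> \<open>(i) policy evaluation\<close>
    and eval: "\<forall>\<iota> i. \<forall>j\<in>{1,2}.
        ereal (V \<iota> i j) = ereal h * util \<gamma> (c \<iota> i j)
          + ereal ((1 - \<rho> * h) * (lam j * h * V \<iota> i (3 - j)
              + (1 - lam j * h) * interp xl dx (\<lambda>k. V \<iota> k j)
                   (grid xl dx i + h * drift r (y j) xl dx i (c \<iota> i j))))"
    \<comment> \<open>(ii) policy update (argmax)\<close>
    and upd: "\<forall>\<iota> i. \<forall>j\<in>{1,2}.
        c (Suc \<iota>) i j \<in> adm r (y j) h xl dx i \<and>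
        (\<forall>c'\<in>adm r (y j) h xl dx i.
           ereal h * util \<gamma> c' + ereal ((1 - \<rho> * h) * (1 - lam j * h)
              * interp xl dx (\<lambda>k. V \<iota> k j) (grid xl dx i + h * drift r (y j) xl dx i c'))
           \<le> ereal h * util \<gamma> (c (Suc \<iota>) i j) + ereal ((1 - \<rho> * h) * (1 - lam j * h)
              * interp xl dx (\<lambda>k. V \<iota> k j)
                  (grid xl dx i + h * drift r (y j) xl dx i (c (Suc \<iota>) i j))))"
  shows "(\<forall>\<iota> i. \<forall>j\<in>{1,2}. V \<iota> i j \<le> V (Suc \<iota>) i j)
    \<and> (\<exists>W :: nat \<Rightarrow> nat \<Rightarrow> real.
         (\<forall>j\<in>{1,2}. bounded (range (\<lambda>i. W i j)))
       \<and> (\<forall>i. \<forall>j\<in>{1,2}. schemeF \<rho> r \<gamma> (y j) (lam j) h xl dx i (W i j) (W i (3 - j)) (\<lambda>k. W k j) = 0)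
       \<and> (\<forall>W'. (\<forall>j\<in>{1,2}. bounded (range (\<lambda>i. W' i j)))
              \<and> (\<forall>i. \<forall>j\<in>{1,2}. schemeF \<rho> r \<gamma> (y j) (lam j) h xl dx i (W' i j) (W' i (3 - j)) (\<lambda>k. W' k j) = 0)
              \<longrightarrow> (\<forall>i. \<forall>j\<in>{1,2}. W' i j = W i j))
       \<and> (\<forall>\<epsilon>>0. \<exists>N. \<forall>\<iota>\<ge>N. \<forall>i. \<forall>j\<in>{1,2}. \<bar>V \<iota> i j - W i j\<bar> < \<epsilon>))"
proof -
  note hp = assms(9) and dxp = assms(10) and rhp = assms(11) and lamh = assms(12)
  note lam0 = assms(8) and rho0 = assms(1) and gam = assms(5)
  define th where "th = 1 - \<rho>*h"
  define A where "A j = (1-\<rho>*h)*(1-lam j*h)" for j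
  define B where "B j = (1-\<rho>*h)*lam j*h" for j
  define IP where "IP U i j c = interp xl dx U (grid xl dx i + h * drift r (y j) xl dx i c)" for U i j c
  define RV where "RV U i j c = h * ur \<gamma> c + A j * IP U i j c" for U i j c
  have th0: "0 \<le> th" "th < 1" using rhp rho0 hp by (auto simp: th_def)
  have A0: "0 \<le> A j" if "j \<in> {1,2}" for j
    using that lamh rhp unfolding A_def by (intro mult_nonneg_nonneg) auto
  have B0: "0 \<le> B j" if "j \<in> {1,2}" for j
    using that lam0 rhp hp unfolding B_def by (intro mult_nonneg_nonneg) auto
  have AB: "A j + B j = th" for j by (simp add: A_def B_def th_def algebra_simps)
  have j3: "3 - j \<in> {1,2}" if "j \<in> {1::nat,2}" for j using that by auto
  have Pge: "grid xl dx i + h * drift r (y j) xl dx i c \<ge> xl" if "c \<in> adm r (y j) h xl dx i" for i j c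
    using that by (simp add: adm_def)
  have IPmono: "IP U i j c \<le> IP U' i j c + d" if "c \<in> adm r (y j) h xl dx i" "\<And>k. U k \<le> U' k + d" for U U' i j c d
    unfolding IP_def by (rule interp_mono[OF dxp Pge[OF that(1)] that(2)])
  have IPle: "IP U i j c \<le> M" if "c \<in> adm r (y j) h xl dx i" "\<And>k. U k \<le> M" for U i j c M
    unfolding IP_def by (rule interp_le[OF dxp Pge[OF that(1)] that(2)])
  have evR: "c \<iota> i j > 0 \<and> V \<iota> i j = RV (\<lambda>k. V \<iota> k j) i j (c \<iota> i j) + B j * V \<iota> i (3-j)"
    if "j \<in> {1,2}" for \<iota> i j
  proof -
    have e: "ereal (V \<iota> i j) = ereal h * util \<gamma> (c \<iota> i j)
          + ereal ((1 - \<rho> * h) * (lam j * h * V \<iota> i (3 - j)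
              + (1 - lam j * h) * IP (\<lambda>k. V \<iota> k j) i j (c \<iota> i j)))"
      using eval that unfolding IP_def by blast
    have cp: "c \<iota> i j > 0"
    proof (rule ccontr)
      assume "\<not> c \<iota> i j > 0"
      hence "util \<gamma> (c \<iota> i j) = -\<infinity>" by (rule util_npos)
      with e hp show False by simp
    qed
    with e have "V \<iota> i j = h * ur \<gamma> (c \<iota> i j) + (1 - \<rho> * h) * (lam j * h * V \<iota> i (3 - j)
              + (1 - lam j * h) * IP (\<lambda>k. V \<iota> k j) i j (c \<iota> i j))"
      by (simp add: util_pos)
    thus ?thesis using cp by (simp add: RV_def A_def B_def algebra_simps)
  qed
  have admc: "c \<iota> i j \<in> adm r (y j) h xl dx i" if "j \<in> {1,2}" for \<iota> i j
    using that init upd by (cases \<iota>) auto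
  have upR: "RV (\<lambda>k. V \<iota> k j) i j c' \<le> RV (\<lambda>k. V \<iota> k j) i j (c (Suc \<iota>) i j)"
    if "j \<in> {1,2}" "c' \<in> adm r (y j) h xl dx i" "c' > 0" for \<iota> i j c'
  proof -
    have "c (Suc \<iota>) i j > 0" using evR[OF that(1)] by blast
    moreover have "ereal h * util \<gamma> c' + ereal ((1 - \<rho> * h) * (1 - lam j * h) * IP (\<lambda>k. V \<iota> k j) i j c')
      \<le> ereal h * util \<gamma> (c (Suc \<iota>) i j) + ereal ((1 - \<rho> * h) * (1 - lam j * h) * IP (\<lambda>k. V \<iota> k j) i j (c (Suc \<iota>) i j))"
      using upd that unfolding IP_def by blast
    ultimately show ?thesis using that(3) by (simp add: util_pos RV_def A_def)
  qed
  have bV: "\<exists>M. \<forall>i. \<forall>j\<in>{1,2}. \<bar>V \<iota> i j\<bar> \<le> M" for \<iota>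
  proof -
    obtain M1 where M1: "\<forall>i. \<bar>V \<iota> i 1\<bar> \<le> M1" using bdd unfolding bounded_real by fastforce
    obtain M2 where M2: "\<forall>i. \<bar>V \<iota> i 2\<bar> \<le> M2" using bdd unfolding bounded_real by fastforce
    show ?thesis using M1 M2 by (intro exI[of _ "max M1 M2"]) (metis insert_iff singletonD max.coboundedI1 max.coboundedI2)
  qed
  have Vle0: "V \<iota> i j \<le> 0" if "j \<in> {1,2}" for \<iota> i j
  proof -
    obtain M where M: "\<forall>i. \<forall>j\<in>{1,2}. \<bar>V \<iota> i j\<bar> \<le> M" using bV by blast
    have "\<forall>i. \<forall>j\<in>{1,2}. V \<iota> i j \<le> th^n * M" for n
    proof (induction n)
      case 0 show ?case using M abs_le_D1 by fastforce
    next
      case (Suc n)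
      show ?case
      proof (intro allI ballI)
        fix i j assume j: "j \<in> {1::nat,2}"
        have "IP (\<lambda>k. V \<iota> k j) i j (c \<iota> i j) \<le> th^n * M"
          using Suc j by (intro IPle[OF admc[OF j]]) auto
        hence 1: "A j * IP (\<lambda>k. V \<iota> k j) i j (c \<iota> i j) \<le> A j * (th^n * M)"
          using A0[OF j] by (rule mult_left_mono)
        have "V \<iota> i (3-j) \<le> th^n * M" using Suc j3[OF j] by blast
        hence 2: "B j * V \<iota> i (3-j) \<le> B j * (th^n * M)" using B0[OF j] by (rule mult_left_mono)
        have 3: "h * ur \<gamma> (c \<iota> i j) \<le> 0"
          using evR[OF j] hp ur_nonpos[OF gam] by (simp add: mult_nonneg_nonpos)
        have 4: "A j * (th^n * M) + B j * (th^n * M) = th^Suc n * M"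
          by (metis AB distrib_right mult.assoc power_Suc)
        show "V \<iota> i j \<le> th^Suc n * M" using evR[OF j, of \<iota> i] 1 2 3 4 unfolding RV_def by linarith
      qed
    qed
    thus ?thesis using geom[OF th0, of "V \<iota> i j" M] that by blast
  qed
  have mono: "V \<iota> i j \<le> V (Suc \<iota>) i j" if "j \<in> {1,2}" for \<iota> i j
  proof -
    obtain M0 where M0: "\<forall>i. \<forall>j\<in>{1,2}. \<bar>V \<iota> i j\<bar> \<le> M0" using bV by blast
    obtain M1 where M1: "\<forall>i. \<forall>j\<in>{1,2}. \<bar>V (Suc \<iota>) i j\<bar> \<le> M1" using bV by blast
    have "\<forall>i. \<forall>j\<in>{1,2}. V \<iota> i j - V (Suc \<iota>) i j \<le> th^n * (M0 + M1)" for n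
    proof (induction n)
      case 0
      show ?case
      proof (intro allI ballI)
        fix i j assume j: "j \<in> {1::nat,2}"
        show "V \<iota> i j - V (Suc \<iota>) i j \<le> th^0 * (M0 + M1)" using M0 M1 j
          using abs_le_D1[of "V \<iota> i j" M0] abs_le_D2[of "V (Suc \<iota>) i j" M1] by auto
      qed
    next
      case (Suc n)
      show ?case
      proof (intro allI ballI)
        fix i j assume j: "j \<in> {1::nat,2}"
        define d where "d = th^n * (M0 + M1)"
        have "IP (\<lambda>k. V \<iota> k j) i j (c (Suc \<iota>) i j) \<le> IP (\<lambda>k. V (Suc \<iota>) k j) i j (c (Suc \<iota>) i j) + d"
        proof (rule IPmono[OF admc[OF j]])
          fix k have "V \<iota> k j - V (Suc \<iota>) k j \<le> d" using Suc j unfolding d_def by blast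
          thus "V \<iota> k j \<le> V (Suc \<iota>) k j + d" by linarith
        qed
        hence 1: "A j * IP (\<lambda>k. V \<iota> k j) i j (c (Suc \<iota>) i j) \<le> A j * (IP (\<lambda>k. V (Suc \<iota>) k j) i j (c (Suc \<iota>) i j) + d)"
          using A0[OF j] by (rule mult_left_mono)
        have "V \<iota> i (3-j) - V (Suc \<iota>) i (3-j) \<le> d" using Suc j3[OF j] unfolding d_def by blast
        hence "V \<iota> i (3-j) \<le> V (Suc \<iota>) i (3-j) + d" by linarith
        hence 2: "B j * V \<iota> i (3-j) \<le> B j * (V (Suc \<iota>) i (3-j) + d)" using B0[OF j] by (rule mult_left_mono)
        have 3: "RV (\<lambda>k. V \<iota> k j) i j (c \<iota> i j) \<le> RV (\<lambda>k. V \<iota> k j) i j (c (Suc \<iota>) i j)"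
          using upR[OF j admc[OF j]] evR[OF j] by blast
        have 4: "A j * d + B j * d = th^Suc n * (M0 + M1)"
          unfolding d_def by (metis AB distrib_right mult.assoc power_Suc)
        show "V \<iota> i j - V (Suc \<iota>) i j \<le> th^Suc n * (M0 + M1)"
          using evR[OF j, of \<iota> i] evR[OF j, of "Suc \<iota>" i] 1 2 3 4 unfolding RV_def
          by (simp add: algebra_simps)
      qed
    qed
    hence "V \<iota> i j - V (Suc \<iota>) i j \<le> 0" using geom[OF th0] that by blast
    thus ?thesis by simp
  qed
  define W where "W i j = (SUP \<iota>. V \<iota> i j)" for i j
  have bddV: "bdd_above (range (\<lambda>\<iota>. V \<iota> i j))" if "j \<in> {1,2}" for i j
    using Vle0[OF that] by (intro bdd_aboveI[of _ 0]) auto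
  have conv: "(\<lambda>\<iota>. V \<iota> i j) \<longlonglongrightarrow> W i j" if "j \<in> {1,2}" for i j
    unfolding W_def using bddV[OF that] mono[OF that] by (intro LIMSEQ_incseq_SUP) (auto intro: incseq_SucI)
  have VleW: "V \<iota> i j \<le> W i j" if "j \<in> {1,2}" for \<iota> i j
    unfolding W_def using bddV[OF that, of i] by (intro cSUP_upper) auto
  have Wle0: "W i j \<le> 0" if "j \<in> {1,2}" for i j
    unfolding W_def using Vle0[OF that] by (intro cSUP_least) auto
  obtain M0 where M0: "\<forall>i. \<forall>j\<in>{1,2}. \<bar>V 0 i j\<bar> \<le> M0" using bV by blast
  have Wb: "\<bar>W i j\<bar> \<le> M0" if "j \<in> {1,2}" for i j
  proof -
    have "\<bar>V 0 i j\<bar> \<le> M0" using M0 that by blast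
    thus ?thesis using VleW[OF that, of 0 i] Wle0[OF that, of i] by linarith
  qed
  have UPW: "RV (\<lambda>k. W k j) i j c' + B j * W i (3-j) \<le> W i j"
    if j: "j \<in> {1,2}" and c': "c' \<in> adm r (y j) h xl dx i" "c' > 0" for i j c'
  proof (rule LIMSEQ_le)
    show "(\<lambda>\<iota>. RV (\<lambda>k. V \<iota> k j) i j c' + B j * V (Suc \<iota>) i (3-j)) \<longlonglongrightarrow> RV (\<lambda>k. W k j) i j c' + B j * W i (3-j)"
      unfolding RV_def IP_def
      by (intro tendsto_intros interp_tendsto[OF dxp Pge[OF c'(1)]] conv[OF j] LIMSEQ_Suc[OF conv[OF j3[OF j]]])
    show "(\<lambda>\<iota>. V (Suc \<iota>) i j) \<longlonglongrightarrow> W i j" by (rule LIMSEQ_Suc[OF conv[OF j]])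
    show "\<exists>N. \<forall>n\<ge>N. RV (\<lambda>k. V n k j) i j c' + B j * V (Suc n) i (3-j) \<le> V (Suc n) i j"
    proof (intro exI allI impI)
      fix n
      have "IP (\<lambda>k. V n k j) i j (c (Suc n) i j) \<le> IP (\<lambda>k. V (Suc n) k j) i j (c (Suc n) i j) + 0"
        using mono[OF j] by (intro IPmono[OF admc[OF j]]) auto
      hence "A j * IP (\<lambda>k. V n k j) i j (c (Suc n) i j) \<le> A j * IP (\<lambda>k. V (Suc n) k j) i j (c (Suc n) i j)"
        using A0[OF j] by (simp add: mult_left_mono)
      thus "RV (\<lambda>k. V n k j) i j c' + B j * V (Suc n) i (3-j) \<le> V (Suc n) i j"
        using upR[OF j c', of n] evR[OF j, of "Suc n" i] unfolding RV_def by linarith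
    qed
  qed
  have LOW: "\<exists>c'\<in>adm r (y j) h xl dx i. c' > 0 \<and> W i j - \<epsilon> \<le> RV (\<lambda>k. W k j) i j c' + B j * W i (3-j)"
    if j: "j \<in> {1,2}" and e: "\<epsilon> > 0" for i j \<epsilon>
  proof -
    have "eventually (\<lambda>\<iota>. W i j - \<epsilon> < V \<iota> i j) sequentially"
      using e by (intro order_tendstoD(1)[OF conv[OF j]]) auto
    then obtain \<iota> where lt: "W i j - \<epsilon> < V \<iota> i j" unfolding eventually_sequentially by blast
    have "IP (\<lambda>k. V \<iota> k j) i j (c \<iota> i j) \<le> IP (\<lambda>k. W k j) i j (c \<iota> i j) + 0"
      using VleW[OF j] by (intro IPmono[OF admc[OF j]]) auto
    hence 1: "A j * IP (\<lambda>k. V \<iota> k j) i j (c \<iota> i j) \<le> A j * IP (\<lambda>k. W k j) i j (c \<iota> i j)"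
      using A0[OF j] by (simp add: mult_left_mono)
    have 2: "B j * V \<iota> i (3-j) \<le> B j * W i (3-j)"
      using B0[OF j] VleW[OF j3[OF j]] by (simp add: mult_left_mono)
    have "W i j - \<epsilon> \<le> RV (\<lambda>k. W k j) i j (c \<iota> i j) + B j * W i (3-j)"
      using evR[OF j, of \<iota> i] lt 1 2 unfolding RV_def by linarith
    thus ?thesis using admc[OF j, of \<iota> i] evR[OF j, of \<iota> i] by blast
  qed
  define UPp where "UPp X i j = (\<forall>c'\<in>adm r (y j) h xl dx i. c' > 0 \<longrightarrow> RV (\<lambda>k. X k j) i j c' + B j * X i (3-j) \<le> X i j)" for X i j
  define LOp where "LOp X i j = (\<forall>\<epsilon>>0. \<exists>c'\<in>adm r (y j) h xl dx i. c' > 0 \<and> X i j - \<epsilon> \<le> RV (\<lambda>k. X k j) i j c' + B j * X i (3-j))" for X i j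
  have fpc: "schemeF \<rho> r \<gamma> (y j) (lam j) h xl dx i (X i j) (X i (3 - j)) (\<lambda>k. X k j) = 0 \<longleftrightarrow> UPp X i j \<and> LOp X i j" for X i j
    unfolding fp_char[OF hp] UPp_def LOp_def RV_def IP_def A_def B_def by simp
  have fixW: "UPp W i j \<and> LOp W i j" if "j \<in> {1,2}" for i j
    unfolding UPp_def LOp_def using UPW[OF that] LOW[OF that] by blast
  have contr: "Y i j - X i j \<le> th * d"
    if X: "\<forall>i. \<forall>j\<in>{1,2}. UPp X i j" and Y: "\<forall>i. \<forall>j\<in>{1,2}. LOp Y i j"
    and d: "\<forall>i. \<forall>j\<in>{1,2}. Y i j - X i j \<le> d" and j: "j \<in> {1,2}" for X Y d i j
  proof -
    have "Y i j - X i j \<le> th * d + e" if e: "e > 0" for e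
    proof -
      obtain c' where c': "c' \<in> adm r (y j) h xl dx i" "c' > 0" "Y i j - e \<le> RV (\<lambda>k. Y k j) i j c' + B j * Y i (3-j)"
      proof -
        have "LOp Y i j" using Y j by blast
        thus ?thesis using e that unfolding LOp_def by auto
      qed
      have "IP (\<lambda>k. Y k j) i j c' \<le> IP (\<lambda>k. X k j) i j c' + d"
      proof (rule IPmono[OF c'(1)])
        fix k have "Y k j - X k j \<le> d" using d j by blast
        thus "Y k j \<le> X k j + d" by linarith
      qed
      hence 1: "A j * IP (\<lambda>k. Y k j) i j c' \<le> A j * (IP (\<lambda>k. X k j) i j c' + d)"
        using A0[OF j] by (rule mult_left_mono)
      have "Y i (3-j) - X i (3-j) \<le> d" using d j3[OF j] by blast
      hence "Y i (3-j) \<le> X i (3-j) + d" by linarith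
      hence 2: "B j * Y i (3-j) \<le> B j * (X i (3-j) + d)" using B0[OF j] by (rule mult_left_mono)
      have "UPp X i j" using X j by blast
      hence 3: "RV (\<lambda>k. X k j) i j c' + B j * X i (3-j) \<le> X i j" using c' unfolding UPp_def by blast
      have 4: "A j * d + B j * d = th * d" by (metis AB distrib_right)
      show ?thesis using c'(3) 1 2 3 4 unfolding RV_def distrib_left by linarith
    qed
    thus ?thesis using field_le_epsilon by blast
  qed
  have rate: "\<forall>i. \<forall>j\<in>{1,2}. W i j - V \<iota> i j \<le> th^\<iota> * M0" for \<iota>
  proof (induction \<iota>)
    case 0 show ?case
    proof (intro allI ballI)
      fix i j assume j: "j \<in> {1::nat,2}"
      have "\<bar>V 0 i j\<bar> \<le> M0" using M0 j by blast
      thus "W i j - V 0 i j \<le> th^0 * M0" using Wle0[OF j, of i] by (simp add: abs_le_iff)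
    qed
  next
    case (Suc n)
    show ?case
    proof (intro allI ballI)
      fix i j assume j: "j \<in> {1::nat,2}"
      define d where "d = th^n * M0"
      have "W i j - V (Suc n) i j \<le> th * d + e" if e: "e > 0" for e
      proof -
        obtain c' where c': "c' \<in> adm r (y j) h xl dx i" "c' > 0" "W i j - e \<le> RV (\<lambda>k. W k j) i j c' + B j * W i (3-j)"
          using LOW[OF j e] by blast
        have "IP (\<lambda>k. W k j) i j c' \<le> IP (\<lambda>k. V n k j) i j c' + d"
        proof (rule IPmono[OF c'(1)])
          fix k have "W k j - V n k j \<le> d" using Suc j unfolding d_def by blast
          thus "W k j \<le> V n k j + d" by linarith
        qed
        hence 1: "A j * IP (\<lambda>k. W k j) i j c' \<le> A j * (IP (\<lambda>k. V n k j) i j c' + d)"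
          using A0[OF j] by (rule mult_left_mono)
        have "W i (3-j) - V n i (3-j) \<le> d" using Suc j3[OF j] unfolding d_def by blast
        hence "W i (3-j) \<le> V (Suc n) i (3-j) + d" using mono[OF j3[OF j], of n i] by linarith
        hence 2: "B j * W i (3-j) \<le> B j * (V (Suc n) i (3-j) + d)" using B0[OF j] by (rule mult_left_mono)
        have "IP (\<lambda>k. V n k j) i j (c (Suc n) i j) \<le> IP (\<lambda>k. V (Suc n) k j) i j (c (Suc n) i j) + 0"
          using mono[OF j] by (intro IPmono[OF admc[OF j]]) auto
        hence 3: "A j * IP (\<lambda>k. V n k j) i j (c (Suc n) i j) \<le> A j * IP (\<lambda>k. V (Suc n) k j) i j (c (Suc n) i j)"
          using A0[OF j] by (simp add: mult_left_mono)
        have 4: "A j * d + B j * d = th * d" using AB[of j] by (metis distrib_right)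
        show ?thesis using c'(3) 1 2 3 4 upR[OF j c'(1,2), of n] evR[OF j, of "Suc n" i]
          unfolding RV_def distrib_left by linarith
      qed
      hence "W i j - V (Suc n) i j \<le> th * d" using field_le_epsilon by blast
      thus "W i j - V (Suc n) i j \<le> th^Suc n * M0" by (simp add: d_def mult.assoc)
    qed
  qed
  show ?thesis
  proof (rule conjI)
    show "\<forall>\<iota> i. \<forall>j\<in>{1,2}. V \<iota> i j \<le> V (Suc \<iota>) i j" using mono by blast
  next
  show "\<exists>W :: nat \<Rightarrow> nat \<Rightarrow> real.
         (\<forall>j\<in>{1,2}. bounded (range (\<lambda>i. W i j)))
       \<and> (\<forall>i. \<forall>j\<in>{1,2}. schemeF \<rho> r \<gamma> (y j) (lam j) h xl dx i (W i j) (W i (3 - j)) (\<lambda>k. W k j) = 0)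
       \<and> (\<forall>W'. (\<forall>j\<in>{1,2}. bounded (range (\<lambda>i. W' i j)))
              \<and> (\<forall>i. \<forall>j\<in>{1,2}. schemeF \<rho> r \<gamma> (y j) (lam j) h xl dx i (W' i j) (W' i (3 - j)) (\<lambda>k. W' k j) = 0)
              \<longrightarrow> (\<forall>i. \<forall>j\<in>{1,2}. W' i j = W i j))
       \<and> (\<forall>\<epsilon>>0. \<exists>N. \<forall>\<iota>\<ge>N. \<forall>i. \<forall>j\<in>{1,2}. \<bar>V \<iota> i j - W i j\<bar> < \<epsilon>)"
  proof (rule exI[of _ W], intro conjI)
    show "\<forall>j\<in>{1,2}. bounded (range (\<lambda>i. W i j))"
    proof
      fix j :: nat assume that: "j \<in> {1,2}"
      show "bounded (range (\<lambda>i. W i j))" unfolding bounded_real using Wb[OF that] by blast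
    qed
    show "\<forall>i. \<forall>j\<in>{1,2}. schemeF \<rho> r \<gamma> (y j) (lam j) h xl dx i (W i j) (W i (3 - j)) (\<lambda>k. W k j) = 0"
    proof (intro allI ballI)
      fix i j :: nat assume that: "j \<in> {1,2}"
      show "schemeF \<rho> r \<gamma> (y j) (lam j) h xl dx i (W i j) (W i (3 - j)) (\<lambda>k. W k j) = 0"
        using fpc[where X=W and i=i and j=j] fixW[OF that] by simp
    qed
  next
    show "\<forall>W'. (\<forall>j\<in>{1,2}. bounded (range (\<lambda>i. W' i j)))
              \<and> (\<forall>i. \<forall>j\<in>{1,2}. schemeF \<rho> r \<gamma> (y j) (lam j) h xl dx i (W' i j) (W' i (3 - j)) (\<lambda>k. W' k j) = 0)
              \<longrightarrow> (\<forall>i. \<forall>j\<in>{1,2}. W' i j = W i j)"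
    proof (rule allI, rule impI)
      fix W' assume H: "(\<forall>j\<in>{1,2}. bounded (range (\<lambda>i. W' i j)))
              \<and> (\<forall>i. \<forall>j\<in>{1,2}. schemeF \<rho> r \<gamma> (y j) (lam j) h xl dx i (W' i j) (W' i (3 - j)) (\<lambda>k. W' k j) = 0)"
      obtain M1 where M1: "\<forall>i. \<bar>W' i 1\<bar> \<le> M1" using H unfolding bounded_real by fastforce
      obtain M2 where M2: "\<forall>i. \<bar>W' i 2\<bar> \<le> M2" using H unfolding bounded_real by fastforce
      define M where "M = max M1 M2"
      have Mb: "\<bar>W' i j\<bar> \<le> M" if "j \<in> {1,2}" for i j
      proof -
        have "\<bar>W' i 1\<bar> \<le> M1" "\<bar>W' i 2\<bar> \<le> M2" using M1 M2 by blast+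
        moreover have "j = 1 \<or> j = 2" using that by simp
        ultimately show ?thesis unfolding M_def by (auto simp: le_max_iff_disj)
      qed
      have fix': "UPp W' i j \<and> LOp W' i j" if "j \<in> {1,2}" for i j proof -
        have "schemeF \<rho> r \<gamma> (y j) (lam j) h xl dx i (W' i j) (W' i (3 - j)) (\<lambda>k. W' k j) = 0"
          using H that by blast
        thus ?thesis using fpc[where X=W' and i=i and j=j] by blast
      qed
      have UA: "\<forall>i. \<forall>j\<in>{1,2}. UPp W i j" "\<forall>i. \<forall>j\<in>{1,2}. LOp W i j"
        "\<forall>i. \<forall>j\<in>{1,2}. UPp W' i j" "\<forall>i. \<forall>j\<in>{1,2}. LOp W' i j" using fixW fix' by blast+
      have dd: "\<forall>i. \<forall>j\<in>{1,2}. \<bar>W' i j - W i j\<bar> \<le> th^n * (M + M0)" for n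
      proof (induction n)
        case 0 show ?case
        proof (intro allI ballI)
          fix i j assume j: "j \<in> {1::nat,2}"
          show "\<bar>W' i j - W i j\<bar> \<le> th^0 * (M + M0)" using Mb[OF j, of i] Wb[OF j, of i] by (simp add: abs_le_iff)
        qed
      next
        case (Suc n)
        have d1: "\<forall>i. \<forall>j\<in>{1,2}. W' i j - W i j \<le> th^n * (M + M0)"
          and d2: "\<forall>i. \<forall>j\<in>{1,2}. W i j - W' i j \<le> th^n * (M + M0)"
          using Suc by (auto simp: abs_le_iff)
        show ?case
        proof (intro allI ballI)
          fix i j assume j: "j \<in> {1::nat,2}"
          have "W' i j - W i j \<le> th * (th^n * (M + M0))" by (rule contr[OF UA(1) UA(4) d1 j])
          moreover have "W i j - W' i j \<le> th * (th^n * (M + M0))" by (rule contr[OF UA(3) UA(2) d2 j])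
          ultimately show "\<bar>W' i j - W i j\<bar> \<le> th^Suc n * (M + M0)" by (simp add: abs_le_iff mult.assoc)
        qed
      qed
      show "\<forall>i. \<forall>j\<in>{1,2}. W' i j = W i j"
      proof (intro allI ballI)
        fix i j assume j: "j \<in> {1::nat,2}"
        have "\<bar>W' i j - W i j\<bar> \<le> th^n * (M + M0)" for n using dd[of n] j by blast
        hence "\<bar>W' i j - W i j\<bar> \<le> 0" by (rule geom[OF th0])
        thus "W' i j = W i j" by simp
      qed
    qed
  next
    show "\<forall>\<epsilon>>0. \<exists>N. \<forall>\<iota>\<ge>N. \<forall>i. \<forall>j\<in>{1,2}. \<bar>V \<iota> i j - W i j\<bar> < \<epsilon>"
    proof (intro allI impI)
      fix \<epsilon> :: real assume e: "\<epsilon> > 0"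
      have "(\<lambda>n. th^n * M0) \<longlonglongrightarrow> 0"
        using th0 by (intro tendsto_mult_left_zero LIMSEQ_power_zero) auto
      hence "eventually (\<lambda>n. th^n * M0 < \<epsilon>) sequentially" using e by (intro order_tendstoD(2)) auto
      then obtain N where N: "\<forall>n\<ge>N. th^n * M0 < \<epsilon>" unfolding eventually_sequentially by blast
      show "\<exists>N. \<forall>\<iota>\<ge>N. \<forall>i. \<forall>j\<in>{1,2}. \<bar>V \<iota> i j - W i j\<bar> < \<epsilon>"
      proof (intro exI allI impI ballI)
        fix \<iota> i j assume "\<iota> \<ge> N" and j: "j \<in> {1::nat,2}"
        have "W i j - V \<iota> i j \<le> th^\<iota> * M0" using rate[of \<iota>] j by blast
        moreover have "th^\<iota> * M0 < \<epsilon>" using N \<open>\<iota> \<ge> N\<close> by blast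
        ultimately have "W i j - V \<iota> i j < \<epsilon>" by linarith
        thus "\<bar>V \<iota> i j - W i j\<bar> < \<epsilon>" using VleW[OF j, of \<iota> i] by simp
      qed
    qed
  qed
  qed
qed

end
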